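(* Let $f$ be a real ternary cubic form ($r=3$) and let $g$ be the AMWP metric of $f$ on $\mathbb{R}^3+iW$. Write $f_{ikp}=\partial^3 f/\partial y_i\partial y_k\partial y_p$ (constants). Let $(g^{p\bar q})$ be the inverse matrix of $(g_{i\bar j})$. Then at every point of $\mathbb{R}^3+iW$ and for all $i,j,k,l\in\{1,2,3\}$, $$R_{i\bar jk\bar l}=g_{i\bar j}g_{k\bar l}+g_{i\bar l}g_{k\bar j}-\sum_{p,q}\frac{g^{p\bar q}f_{ikp}f_{jlq}}{64\,f(y)^2}.$$
   Context: Let $f(y_1,\dots,y_r)$ be a real cubic form on $\mathbb{R}^r$. Its index cone $W$ is the open cone of $y$ with $f(y)>0$ at which the Hessian $(\partial^2f/\partial y_i\partial y_j)(y)$ has signature $(1,r-1)$. On $\mathbb{R}^r+iW\subset\mathbb{C}^r$, with coordinates $t_j=x_j+iy_j$, the AMWP metric of $f$ is the Kähler metric with potential $K_0=-\log f(y)$. Thus $g_{i\bar j}=\partial^2K_0/\partial t_i\partial\bar t_j=-\tfrac14\partial^2\log f/\partial y_i\partial y_j$. Its curvature tensor is $$R_{i\bar jk\bar l}=\frac{\partial^2 g_{i\bar j}}{\partial t_k\partial\bar t_l}-\sum_{d,e}g^{\bar e d}\frac{\partial g_{i\bar e}}{\partial t_k}\frac{\partial g_{\bar j d}}{\partial\bar t_l},$$ where $(g^{\bar e d})$ is the inverse of $(g_{i\bar j})$. *)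

theory Defs
  imports "HOL-Analysis.Analysis"
begin

definition cubic_form3 :: "(real^3 \<Rightarrow> real) \<Rightarrow> bool" where
  "cubic_form3 f \<longleftrightarrow> (\<exists>C :: 3 \<Rightarrow> 3 \<Rightarrow> 3 \<Rightarrow> real.
      \<forall>y. f y = (\<Sum>a\<in>UNIV. \<Sum>b\<in>UNIV. \<Sum>c\<in>UNIV. C a b c * y$a * y$b * y$c))"

definition rpd :: "3 \<Rightarrow> (real^3 \<Rightarrow> real) \<Rightarrow> real^3 \<Rightarrow> real" where
  "rpd k h y = deriv (\<lambda>s. h (y + s *\<^sub>R axis k 1)) 0"

definition hessian3 :: "(real^3 \<Rightarrow> real) \<Rightarrow> real^3 \<Rightarrow> real^3^3" where
  "hessian3 h y = (\<chi> i j. rpd i (rpd j h) y)"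

definition pos_index :: "real^'n^'n \<Rightarrow> nat" where
  "pos_index A = Max {dim V | V. subspace V \<and> (\<forall>v\<in>V. v \<noteq> 0 \<longrightarrow> v \<bullet> (A *v v) > 0)}"

definition neg_index :: "real^'n^'n \<Rightarrow> nat" where
  "neg_index A = Max {dim V | V. subspace V \<and> (\<forall>v\<in>V. v \<noteq> 0 \<longrightarrow> v \<bullet> (A *v v) < 0)}"

definition has_signature :: "real^'n^'n \<Rightarrow> nat \<Rightarrow> nat \<Rightarrow> bool" where
  "has_signature A p q \<longleftrightarrow> pos_index A = p \<and> neg_index A = q"

definition index_cone3 :: "(real^3 \<Rightarrow> real) \<Rightarrow> (real^3) set" where
  "index_cone3 f = {y. f y > 0 \<and> has_signature (hessian3 f y) 1 2}"

definition dx :: "3 \<Rightarrow> (complex^3 \<Rightarrow> complex) \<Rightarrow> complex^3 \<Rightarrow> complex" where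
  "dx k F t = vector_derivative (\<lambda>s::real. F (t + axis k (complex_of_real s))) (at 0)"

definition dy :: "3 \<Rightarrow> (complex^3 \<Rightarrow> complex) \<Rightarrow> complex^3 \<Rightarrow> complex" where
  "dy k F t = vector_derivative (\<lambda>s::real. F (t + axis k (\<i> * complex_of_real s))) (at 0)"

definition dt :: "3 \<Rightarrow> (complex^3 \<Rightarrow> complex) \<Rightarrow> complex^3 \<Rightarrow> complex" where
  "dt k F t = (dx k F t - \<i> * dy k F t) / 2"

definition dtb :: "3 \<Rightarrow> (complex^3 \<Rightarrow> complex) \<Rightarrow> complex^3 \<Rightarrow> complex" where
  "dtb k F t = (dx k F t + \<i> * dy k F t) / 2"

definition Imv :: "complex^3 \<Rightarrow> real^3" where
  "Imv t = (\<chi> i. Im (t$i))"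

definition amwp_potential :: "(real^3 \<Rightarrow> real) \<Rightarrow> complex^3 \<Rightarrow> complex" where
  "amwp_potential f t = complex_of_real (- ln (f (Imv t)))"

definition amwp_g :: "(real^3 \<Rightarrow> real) \<Rightarrow> 3 \<Rightarrow> 3 \<Rightarrow> complex^3 \<Rightarrow> complex" where
  "amwp_g f i j t = dt i (dtb j (amwp_potential f)) t"

definition amwp_gmat :: "(real^3 \<Rightarrow> real) \<Rightarrow> complex^3 \<Rightarrow> complex^3^3" where
  "amwp_gmat f t = (\<chi> i j. amwp_g f i j t)"

definition amwp_ginv :: "(real^3 \<Rightarrow> real) \<Rightarrow> complex^3 \<Rightarrow> 3 \<Rightarrow> 3 \<Rightarrow> complex" where
  "amwp_ginv f t e d = matrix_inv (amwp_gmat f t) $ e $ d"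

text \<open>R_{i\bar j k\bar l}; note g_{\bar j d} = g_{d \bar j}.\<close>
definition amwp_R :: "(real^3 \<Rightarrow> real) \<Rightarrow> 3 \<Rightarrow> 3 \<Rightarrow> 3 \<Rightarrow> 3 \<Rightarrow> complex^3 \<Rightarrow> complex" where
  "amwp_R f i j k l t =
     dt k (dtb l (amwp_g f i j)) t
     - (\<Sum>d\<in>UNIV. \<Sum>e\<in>UNIV. amwp_ginv f t e d * dt k (amwp_g f i e) t * dtb l (amwp_g f d j) t)"

definition f3 :: "(real^3 \<Rightarrow> real) \<Rightarrow> 3 \<Rightarrow> 3 \<Rightarrow> 3 \<Rightarrow> real^3 \<Rightarrow> real" where
  "f3 f i k p y = rpd i (rpd k (rpd p f)) y"

end

theory Submission
  imports Defs
begin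


definition S3 :: "(3 \<Rightarrow> 3 \<Rightarrow> 3 \<Rightarrow> real) \<Rightarrow> 3 \<Rightarrow> 3 \<Rightarrow> 3 \<Rightarrow> real" where
  "S3 C a b c = C a b c + C a c b + C b a c + C b c a + C c a b + C c b a"

definition P0 :: "(3 \<Rightarrow> 3 \<Rightarrow> 3 \<Rightarrow> real) \<Rightarrow> real^3 \<Rightarrow> real" where
  "P0 C y = (\<Sum>a\<in>UNIV. \<Sum>b\<in>UNIV. \<Sum>c\<in>UNIV. C a b c * y$a * y$b * y$c)"
definition P1 :: "(3 \<Rightarrow> 3 \<Rightarrow> 3 \<Rightarrow> real) \<Rightarrow> 3 \<Rightarrow> real^3 \<Rightarrow> real" where
  "P1 C i y = (1/2) * (\<Sum>b\<in>UNIV. \<Sum>c\<in>UNIV. S3 C i b c * y$b * y$c)"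
definition P2 :: "(3 \<Rightarrow> 3 \<Rightarrow> 3 \<Rightarrow> real) \<Rightarrow> 3 \<Rightarrow> 3 \<Rightarrow> real^3 \<Rightarrow> real" where
  "P2 C i j y = (\<Sum>c\<in>UNIV. S3 C i j c * y$c)"

lemma S3_sym1: "S3 C a b c = S3 C b a c" and S3_sym2: "S3 C a b c = S3 C a c b"
  by (simp_all add: S3_def)

lemma axis_nth: "(y + s *\<^sub>R axis k 1) $ a = y $ a + s * (if a = k then 1 else 0)"
  by (simp add: axis_def)

lemma dl: "(\<Sum>a\<in>(UNIV::3 set). (if a = k then (1::real) else 0) * X a) = X k"
proof -
  have "(\<Sum>a\<in>UNIV. (if a = k then (1::real) else 0) * X a) = (\<Sum>a\<in>UNIV. if a = k then X a else 0)"
    by (intro sum.cong) auto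
  then show ?thesis by (simp add: sum.delta)
qed

lemma P0_deriv:
  "((\<lambda>s. P0 C (y + s *\<^sub>R axis k (1::real))) has_real_derivative P1 C k y) (at 0)"
proof -
  let ?T1 = "(\<Sum>b\<in>UNIV. \<Sum>c\<in>UNIV. C k b c * y$b * y$c)"
  let ?T2 = "(\<Sum>b\<in>UNIV. \<Sum>c\<in>UNIV. C b k c * y$b * y$c)"
  let ?T3 = "(\<Sum>b\<in>UNIV. \<Sum>c\<in>UNIV. C b c k * y$b * y$c)"
  have r: "(\<Sum>a\<in>UNIV. \<Sum>b\<in>UNIV. \<Sum>c\<in>UNIV. C a b c * ((if a = k then 1 else 0) * y$b * y$c
        + y$a * (if b = k then 1 else 0) * y$c + y$a * y$b * (if c = k then 1 else 0)))
     = ?T1 + ?T2 + ?T3"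
  proof -
    have "(\<Sum>a\<in>UNIV. \<Sum>b\<in>UNIV. \<Sum>c\<in>UNIV. C a b c * ((if a = k then 1 else 0) * y$b * y$c
        + y$a * (if b = k then 1 else 0) * y$c + y$a * y$b * (if c = k then 1 else 0)))
      = (\<Sum>a\<in>UNIV. (if a = k then 1 else 0) * (\<Sum>b\<in>UNIV. \<Sum>c\<in>UNIV. C a b c * y$b * y$c))
      + (\<Sum>a\<in>UNIV. \<Sum>b\<in>UNIV. (if b = k then 1 else 0) * (\<Sum>c\<in>UNIV. C a b c * y$a * y$c))
      + (\<Sum>a\<in>UNIV. \<Sum>b\<in>UNIV. \<Sum>c\<in>UNIV. (if c = k then 1 else 0) * (C a b c * y$a * y$b))"
      by (simp add: sum.distrib sum_distrib_left algebra_simps)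
    also have "\<dots> = ?T1 + ?T2 + ?T3" by (simp only: dl)
    finally show ?thesis .
  qed
  have sw: "(\<Sum>b\<in>UNIV. \<Sum>c\<in>UNIV. X c b * y$b * y$c) = (\<Sum>b\<in>UNIV. \<Sum>c\<in>UNIV. X b c * y$b * y$c)" for X :: "3\<Rightarrow>3\<Rightarrow>real"
    by (subst sum.swap) (simp add: mult.commute mult.left_commute)
  have "P1 C k y = (1/2) * (?T1 + (\<Sum>b\<in>UNIV. \<Sum>c\<in>UNIV. C k c b * y$b * y$c) + ?T2 + (\<Sum>b\<in>UNIV. \<Sum>c\<in>UNIV. C b c k * y$b * y$c)
      + (\<Sum>b\<in>UNIV. \<Sum>c\<in>UNIV. C c k b * y$b * y$c) + (\<Sum>b\<in>UNIV. \<Sum>c\<in>UNIV. C c b k * y$b * y$c))"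
    unfolding P1_def S3_def by (simp add: sum.distrib algebra_simps)
  also have "\<dots> = ?T1 + ?T2 + ?T3"
    using sw[of "\<lambda>c b. C k c b"] sw[of "\<lambda>c b. C c k b"] sw[of "\<lambda>c b. C c b k"] by simp
  finally have p1: "P1 C k y = ?T1 + ?T2 + ?T3" .
  show ?thesis
    unfolding P0_def axis_nth
    apply (rule derivative_eq_intros refl | simp)+
    using r p1 by (simp add: algebra_simps)
qed

lemma P1_deriv:
  "((\<lambda>s. P1 C i (y + s *\<^sub>R axis k (1::real))) has_real_derivative P2 C i k y) (at 0)"
proof -
  have r: "(1/2) * (\<Sum>b\<in>UNIV. \<Sum>c\<in>UNIV. S3 C i b c * ((if b = k then 1 else 0) * y$c + y$b * (if c = k then 1 else 0)))
     = P2 C i k y"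
  proof -
    have "(\<Sum>b\<in>UNIV. \<Sum>c\<in>UNIV. S3 C i b c * ((if b = k then 1 else 0) * y$c + y$b * (if c = k then 1 else 0)))
      = (\<Sum>b\<in>UNIV. (if b = k then 1 else 0) * (\<Sum>c\<in>UNIV. S3 C i b c * y$c))
      + (\<Sum>b\<in>UNIV. \<Sum>c\<in>UNIV. (if c = k then 1 else 0) * (S3 C i b c * y$b))"
      by (simp add: sum.distrib sum_distrib_left algebra_simps)
    also have "\<dots> = (\<Sum>c\<in>UNIV. S3 C i k c * y$c) + (\<Sum>b\<in>UNIV. S3 C i b k * y$b)"
      by (simp only: dl)
    also have "\<dots> = 2 * P2 C i k y" unfolding P2_def using S3_sym2[of C i] by simp
    finally show ?thesis by simp
  qed
  show ?thesis
    unfolding P1_def axis_nth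
    apply (rule derivative_eq_intros refl | simp)+
    using r by (simp add: algebra_simps)
qed

lemma P2_deriv:
  "((\<lambda>s. P2 C i j (y + s *\<^sub>R axis k (1::real))) has_real_derivative S3 C i j k) (at 0)"
proof -
  have r: "(\<Sum>c\<in>UNIV. S3 C i j c * (if c = k then 1 else 0)) = S3 C i j k"
    using dl[of k "\<lambda>c. S3 C i j c"] by (simp add: mult.commute)
  show ?thesis
    unfolding P2_def axis_nth
    apply (rule derivative_eq_intros refl | simp)+
    using r by (simp add: algebra_simps)
qed

lemma euler1: "(\<Sum>c\<in>UNIV. P2 C i c y * y$c) = 2 * P1 C i y"
  unfolding P2_def P1_def
  by (simp add: sum_distrib_left sum_distrib_right mult_ac)

lemma euler2: "(\<Sum>c\<in>UNIV. S3 C i j c * y$c) = P2 C i j y"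
  unfolding P2_def by simp

definition T3 :: "(3 \<Rightarrow> 3 \<Rightarrow> 3 \<Rightarrow> real) \<Rightarrow> real^3 \<Rightarrow> real" where
  "T3 X y = (\<Sum>a\<in>UNIV. \<Sum>b\<in>UNIV. \<Sum>c\<in>UNIV. X a b c * (y$a * y$b * y$c))"

lemma T3_sw12: "T3 X y = T3 (\<lambda>a b c. X b a c) y"
  unfolding T3_def by (subst sum.swap) (simp add: mult_ac)

lemma T3_sw23: "T3 X y = T3 (\<lambda>a b c. X a c b) y"
  unfolding T3_def
  apply (rule sum.cong[OF refl])
  apply (subst sum.swap)
  apply (simp add: mult_ac)
  done

lemma T3_add: "T3 (\<lambda>a b c. X a b c + Y a b c) y = T3 X y + T3 Y y"
  unfolding T3_def by (simp add: sum.distrib algebra_simps)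

lemma euler3: "(\<Sum>i\<in>UNIV. P1 C i y * y$i) = 3 * P0 C y"
proof -
  have "(\<Sum>i\<in>UNIV. P1 C i y * y$i) = (1/2) * T3 (S3 C) y"
    unfolding P1_def T3_def by (simp add: sum_distrib_left sum_distrib_right mult_ac)
  also have "T3 (S3 C) y = 6 * T3 C y"
  proof -
    have "T3 (S3 C) y = T3 C y + T3 (\<lambda>a b c. C a c b) y + T3 (\<lambda>a b c. C b a c) y
        + T3 (\<lambda>a b c. C b c a) y + T3 (\<lambda>a b c. C c a b) y + T3 (\<lambda>a b c. C c b a) y"
      unfolding S3_def T3_add by simp
    moreover have "T3 (\<lambda>a b c. C a c b) y = T3 C y" by (rule T3_sw23[symmetric])
    moreover have "T3 (\<lambda>a b c. C b a c) y = T3 C y" by (rule T3_sw12[symmetric])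
    moreover have "T3 (\<lambda>a b c. C b c a) y = T3 C y"
      using T3_sw12[of "\<lambda>a b c. C b c a" y] T3_sw23[of "\<lambda>a b c. C a c b" y] by linarith
    moreover have "T3 (\<lambda>a b c. C c a b) y = T3 C y"
      using T3_sw23[of "\<lambda>a b c. C c a b" y] T3_sw12[of "\<lambda>a b c. C b a c" y] by linarith
    moreover have "T3 (\<lambda>a b c. C c b a) y = T3 C y"
      using T3_sw12[of "\<lambda>a b c. C c b a" y] T3_sw23[of "\<lambda>a b c. C c a b" y] T3_sw12[of "\<lambda>a b c. C b a c" y] by linarith
    ultimately show ?thesis by simp
  qed
  also have "T3 C y = P0 C y" unfolding T3_def P0_def by (simp add: mult_ac)
  finally show ?thesis by simp
qed



lemma rpd_P0: "rpd k (P0 C) = P1 C k"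
  by (rule ext) (simp add: rpd_def DERIV_imp_deriv[OF P0_deriv])
lemma rpd_P1: "rpd k (P1 C i) = P2 C i k"
  by (rule ext) (simp add: rpd_def DERIV_imp_deriv[OF P1_deriv])
lemma rpd_P2: "rpd k (P2 C i j) y = S3 C i j k"
  by (simp add: rpd_def DERIV_imp_deriv[OF P2_deriv])

lemma cubic_P0: assumes "cubic_form3 f" obtains C where "f = P0 C"
  using assms unfolding cubic_form3_def P0_def by (auto simp: fun_eq_iff)

lemma f3_P0: "f3 (P0 C) i k p y = S3 C p k i"
  unfolding f3_def rpd_P0 rpd_P1 rpd_P2 ..

lemma hessian_P0: "hessian3 (P0 C) y = (\<chi> i j. P2 C j i y)"
  unfolding hessian3_def rpd_P0 rpd_P1 ..

lemma Imv_x: "Imv (t + axis k (complex_of_real s)) = Imv t"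
  by (simp add: Imv_def axis_def vec_eq_iff)

lemma Imv_y: "Imv (t + axis k (\<i> * complex_of_real s)) = Imv t + s *\<^sub>R axis k 1"
  by (simp add: Imv_def axis_def vec_eq_iff)

lemma wirt:
  assumes V: "open V" and F: "\<And>t'. Imv t' \<in> V \<Longrightarrow> F t' = c * complex_of_real (h (Imv t'))"
   and D: "((\<lambda>s. h (Imv t + s *\<^sub>R axis k 1)) has_real_derivative D) (at 0)"
   and t: "Imv t \<in> V"
  shows "dt k F t = (- \<i> / 2 * c) * complex_of_real D"
    and "dtb k F t = (\<i> / 2 * c) * complex_of_real D"
proof -
  have "dx k F t = vector_derivative (\<lambda>s::real. c * complex_of_real (h (Imv t))) (at 0)"
    unfolding dx_def using F t by (simp add: Imv_x)
  hence x: "dx k F t = 0" by simp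
  let ?S = "{s::real. Imv t + s *\<^sub>R axis k 1 \<in> V}"
  have So: "open ?S"
    using continuous_open_vimage[OF V, of "\<lambda>s::real. Imv t + s *\<^sub>R axis k 1"]
    by (auto simp: vimage_def intro!: continuous_intros)
  have "((\<lambda>s. c * complex_of_real (h (Imv t + s *\<^sub>R axis k 1))) has_vector_derivative c * complex_of_real D) (at 0)"
    by (intro has_vector_derivative_mult_right has_vector_derivative_of_real D)
  hence "((\<lambda>s::real. F (t + axis k (\<i> * complex_of_real s))) has_vector_derivative c * complex_of_real D) (at 0)"
    by (rule has_vector_derivative_transform_within_open[OF _ So]) (use t F in \<open>auto simp: Imv_y\<close>)
  hence y: "dy k F t = c * complex_of_real D"
    unfolding dy_def by (rule vector_derivative_at)
  show "dt k F t = (- \<i> / 2 * c) * complex_of_real D"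
    unfolding dt_def x y by (simp add: field_simps)
  show "dtb k F t = (\<i> / 2 * c) * complex_of_real D"
    unfolding dtb_def x y by (simp add: field_simps)
qed



definition ph2 :: "real \<Rightarrow> (3\<Rightarrow>real) \<Rightarrow> (3\<Rightarrow>3\<Rightarrow>real) \<Rightarrow> 3 \<Rightarrow> 3 \<Rightarrow> real" where
  "ph2 p0 p1 p2 i j = p2 i j / p0 - p1 i * p1 j / p0^2"
definition ph3 :: "real \<Rightarrow> (3\<Rightarrow>real) \<Rightarrow> (3\<Rightarrow>3\<Rightarrow>real) \<Rightarrow> (3\<Rightarrow>3\<Rightarrow>3\<Rightarrow>real) \<Rightarrow> 3 \<Rightarrow> 3 \<Rightarrow> 3 \<Rightarrow> real" where
  "ph3 p0 p1 p2 p3 i j k = p3 i j k / p0 - (p2 i j * p1 k + p2 i k * p1 j + p2 j k * p1 i) / p0^2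
     + 2 * p1 i * p1 j * p1 k / p0^3"
definition ph4 :: "real \<Rightarrow> (3\<Rightarrow>real) \<Rightarrow> (3\<Rightarrow>3\<Rightarrow>real) \<Rightarrow> (3\<Rightarrow>3\<Rightarrow>3\<Rightarrow>real) \<Rightarrow> 3 \<Rightarrow> 3 \<Rightarrow> 3 \<Rightarrow> 3 \<Rightarrow> real" where
  "ph4 p0 p1 p2 p3 i j k l = - p3 i j k * p1 l / p0^2
     - (p3 i j l * p1 k + p2 i j * p2 k l + p3 i k l * p1 j + p2 i k * p2 j l + p3 j k l * p1 i + p2 j k * p2 i l) / p0^2
     + 2 * (p2 i j * p1 k + p2 i k * p1 j + p2 j k * p1 i) * p1 l / p0^3
     + 2 * (p2 i l * p1 j * p1 k + p1 i * p2 j l * p1 k + p1 i * p1 j * p2 k l) / p0^3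
     - 6 * p1 i * p1 j * p1 k * p1 l / p0^4"

definition "phi1 C i y = P1 C i y / P0 C y"
definition "phi2 C i j y = ph2 (P0 C y) (\<lambda>a. P1 C a y) (\<lambda>a b. P2 C a b y) i j"
definition "phi3 C i j k y = ph3 (P0 C y) (\<lambda>a. P1 C a y) (\<lambda>a b. P2 C a b y) (S3 C) i j k"
definition "phi4 C i j k l y = ph4 (P0 C y) (\<lambda>a. P1 C a y) (\<lambda>a b. P2 C a b y) (S3 C) i j k l"

lemma phi0_deriv: assumes "P0 C y > 0"
  shows "((\<lambda>s. - ln (P0 C (y + s *\<^sub>R axis k (1::real)))) has_real_derivative - phi1 C k y) (at 0)"
  unfolding phi1_def
  apply (rule derivative_eq_intros P0_deriv refl | simp add: assms)+
  done

lemma phi1_deriv: assumes "P0 C y \<noteq> 0"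
  shows "((\<lambda>s. phi1 C i (y + s *\<^sub>R axis k (1::real))) has_real_derivative phi2 C i k y) (at 0)"
  unfolding phi1_def phi2_def ph2_def
  apply (rule derivative_eq_intros P0_deriv P1_deriv refl | simp add: assms)+
  using assms by (simp add: field_simps power2_eq_square)

lemma phi2_deriv: assumes "P0 C y \<noteq> 0"
  shows "((\<lambda>s. phi2 C i j (y + s *\<^sub>R axis k (1::real))) has_real_derivative phi3 C i j k y) (at 0)"
  unfolding phi3_def phi2_def ph2_def ph3_def
  apply (rule derivative_eq_intros P0_deriv P1_deriv P2_deriv refl | simp add: assms)+
  using assms by (simp add: field_simps) algebra

lemma phi3_deriv: assumes "P0 C y \<noteq> 0"
  shows "((\<lambda>s. phi3 C i j k (y + s *\<^sub>R axis l (1::real))) has_real_derivative phi4 C i j k l y) (at 0)"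
  unfolding phi3_def phi4_def ph3_def ph4_def
  apply (rule derivative_eq_intros P0_deriv P1_deriv P2_deriv refl | simp add: assms)+
  using assms by (simp add: field_simps) algebra



definition Bf :: "(3\<Rightarrow>3\<Rightarrow>real) \<Rightarrow> (3\<Rightarrow>real) \<Rightarrow> (3\<Rightarrow>real) \<Rightarrow> real" where
  "Bf M a b = (\<Sum>d\<in>UNIV. \<Sum>e\<in>UNIV. M e d * a e * b d)"

lemma Bf_left: "Bf M (\<lambda>e. x1 * a1 e + x2 * a2 e + x3 * a3 e + x4 * a4 e) b
   = x1 * Bf M a1 b + x2 * Bf M a2 b + x3 * Bf M a3 b + x4 * Bf M a4 b"
  unfolding Bf_def by (simp add: sum.distrib sum_distrib_left algebra_simps)

lemma Bf_right: "Bf M a (\<lambda>e. x1 * a1 e + x2 * a2 e + x3 * a3 e + x4 * a4 e)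
   = x1 * Bf M a a1 + x2 * Bf M a a2 + x3 * Bf M a a3 + x4 * Bf M a a4"
  unfolding Bf_def by (simp add: sum.distrib sum_distrib_left algebra_simps)

lemma dlr: "(\<Sum>j\<in>(UNIV::3 set). (if e = j then (1::real) else 0) * X j) = X e"
proof -
  have "(\<Sum>j\<in>(UNIV::3 set). (if e = j then (1::real) else 0) * X j) = (\<Sum>j\<in>UNIV. if e = j then X j else 0)"
    by (intro sum.cong) auto
  then show ?thesis by (simp add: sum.delta')
qed

lemma dlr2: "(\<Sum>j\<in>(UNIV::3 set). X j * (if e = j then (1::real) else 0)) = X e"
  using dlr[of e X] by (simp add: mult.commute)

lemma dl2: "(\<Sum>j\<in>(UNIV::3 set). X j * (if j = e then (1::real) else 0)) = X e"
  using dl[of e X] by (simp add: mult.commute)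

lemma key:
 fixes p0 :: real and p1 y :: "3\<Rightarrow>real" and p2 M :: "3\<Rightarrow>3\<Rightarrow>real" and p3 :: "3\<Rightarrow>3\<Rightarrow>3\<Rightarrow>real"
 assumes p0: "p0 \<noteq> 0"
 and s2: "\<And>a b. p2 a b = p2 b a"
 and s3a: "\<And>a b c. p3 a b c = p3 b a c" and s3b: "\<And>a b c. p3 a b c = p3 a c b"
 and e1: "\<And>i. (\<Sum>c\<in>UNIV. p2 i c * y c) = 2 * p1 i"
 and e2: "\<And>a b. (\<Sum>c\<in>UNIV. p3 a b c * y c) = p2 a b"
 and e3: "(\<Sum>i\<in>UNIV. p1 i * y i) = 3 * p0"
 and inv: "\<And>e j. (\<Sum>d\<in>UNIV. M e d * (- ph2 p0 p1 p2 d j / 4)) = (if e = j then 1 else 0)"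
 and msym: "\<And>a b. M a b = M b a"
 shows "- ph4 p0 p1 p2 p3 j i l k / 16 - (\<Sum>d\<in>UNIV. \<Sum>e\<in>UNIV. M e d * ph3 p0 p1 p2 p3 e i k * ph3 p0 p1 p2 p3 j d l) / 64
   = (- ph2 p0 p1 p2 j i / 4) * (- ph2 p0 p1 p2 l k / 4) + (- ph2 p0 p1 p2 l i / 4) * (- ph2 p0 p1 p2 j k / 4)
     - (\<Sum>p\<in>UNIV. \<Sum>q\<in>UNIV. M q p * p3 p k i * p3 q l j) / (64 * p0^2)"
proof -
  define G where "G d j = - ph2 p0 p1 p2 d j / 4" for d j
  have inv': "(\<Sum>d\<in>UNIV. M e d * G d j) = (if e = j then 1 else 0)" for e j
    using inv unfolding G_def .
  have Gsym: "G a b = G b a" for a b unfolding G_def ph2_def using s2[of a b] by (simp add: mult.commute)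
  have Gy: "(\<Sum>j\<in>UNIV. G i j * y j) = p1 i / (4 * p0)" for i
  proof -
    have "G i j * y j = (p1 i / (4*p0^2)) * (p1 j * y j) - (1/(4*p0)) * (p2 i j * y j)" for j
      unfolding G_def ph2_def using p0 by (simp add: field_simps)
    hence "(\<Sum>j\<in>UNIV. G i j * y j) = (p1 i / (4*p0^2)) * (\<Sum>j\<in>UNIV. p1 j * y j) - (1/(4*p0)) * (\<Sum>j\<in>UNIV. p2 i j * y j)"
      by (simp add: sum_subtractf sum_distrib_left)
    also have "\<dots> = p1 i / (4 * p0)" using e1 e3 p0 by (simp add: field_simps power2_eq_square)
    finally show ?thesis .
  qed
  have Mp: "(\<Sum>d\<in>UNIV. M e d * p1 d) = 4 * p0 * y e" for e
  proof -
    have "(\<Sum>d\<in>UNIV. M e d * p1 d) = (\<Sum>d\<in>UNIV. M e d * (4 * p0 * (\<Sum>j\<in>UNIV. G d j * y j)))"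
      using Gy p0 by simp
    also have "\<dots> = 4 * p0 * (\<Sum>j\<in>UNIV. (\<Sum>d\<in>UNIV. M e d * G d j) * y j)"
      apply (simp add: sum_distrib_left sum_distrib_right mult_ac)
      apply (rule sum.swap)
      done
    also have "\<dots> = 4 * p0 * y e" unfolding inv' by (simp add: dl dl2 dlr dlr2)
    finally show ?thesis .
  qed
  have BGl: "Bf M (\<lambda>e. G e i) b = b i" for i b
  proof -
    have "Bf M (\<lambda>e. G e i) b = (\<Sum>d\<in>UNIV. (\<Sum>e\<in>UNIV. M d e * G e i) * b d)"
      unfolding Bf_def using msym by (simp add: sum_distrib_right)
    also have "\<dots> = b i" unfolding inv' by (simp add: dl dl2 dlr dlr2)
    finally show ?thesis .
  qed
  have BGr: "Bf M a (\<lambda>d. G d j) = a j" for j a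
  proof -
    have "Bf M a (\<lambda>d. G d j) = (\<Sum>e\<in>UNIV. a e * (\<Sum>d\<in>UNIV. M e d * G d j))"
      unfolding Bf_def by (subst sum.swap) (simp add: sum_distrib_left mult_ac)
    also have "\<dots> = a j" unfolding inv' by (simp add: dl dl2 dlr dlr2)
    finally show ?thesis .
  qed
  have BPl: "Bf M p1 b = 4 * p0 * (\<Sum>d\<in>UNIV. y d * b d)" for b
  proof -
    have "Bf M p1 b = (\<Sum>d\<in>UNIV. (\<Sum>e\<in>UNIV. M d e * p1 e) * b d)"
      unfolding Bf_def using msym by (simp add: sum_distrib_right)
    also have "\<dots> = 4 * p0 * (\<Sum>d\<in>UNIV. y d * b d)" unfolding Mp by (simp add: sum_distrib_left mult_ac)
    finally show ?thesis .
  qed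
  have BPr: "Bf M a p1 = 4 * p0 * (\<Sum>e\<in>UNIV. a e * y e)" for a
  proof -
    have "Bf M a p1 = (\<Sum>e\<in>UNIV. a e * (\<Sum>d\<in>UNIV. M e d * p1 d))"
      unfolding Bf_def by (subst sum.swap) (simp add: sum_distrib_left mult_ac)
    also have "\<dots> = 4 * p0 * (\<Sum>e\<in>UNIV. a e * y e)" unfolding Mp by (simp add: sum_distrib_left mult_ac)
    finally show ?thesis .
  qed
  have u: "(\<lambda>e. ph3 p0 p1 p2 p3 e i k) = (\<lambda>e. (1/p0) * p3 e i k + (4 * p1 k / p0) * G e i
       + (4 * p1 i / p0) * G e k + (- (p2 i k / p0^2)) * p1 e)"
    using p0 unfolding G_def ph2_def ph3_def by (simp add: fun_eq_iff field_simps) algebra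
  have v: "(\<lambda>d. ph3 p0 p1 p2 p3 j d l) = (\<lambda>d. (1/p0) * p3 j d l + (4 * p1 l / p0) * G d j
       + (4 * p1 j / p0) * G d l + (- (p2 j l / p0^2)) * p1 d)"
  proof (rule ext)
    fix d
    have "p2 j d = p2 d j" by (rule s2)
    then show "ph3 p0 p1 p2 p3 j d l = (1/p0) * p3 j d l + (4 * p1 l / p0) * G d j
       + (4 * p1 j / p0) * G d l + (- (p2 j l / p0^2)) * p1 d"
      using p0 unfolding G_def ph2_def ph3_def by (simp add: field_simps) (simp add: algebra_simps eval_nat_numeral)
  qed
  have canon: "p3 i k j = p3 i j k"
    "p3 j i k = p3 i j k"
    "p3 j k i = p3 i j k"
    "p3 k i j = p3 i j k"
    "p3 k j i = p3 i j k"
    "p3 i l j = p3 i j l"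
    "p3 j i l = p3 i j l"
    "p3 j l i = p3 i j l"
    "p3 l i j = p3 i j l"
    "p3 l j i = p3 i j l"
    "p3 i l k = p3 i k l"
    "p3 k i l = p3 i k l"
    "p3 k l i = p3 i k l"
    "p3 l i k = p3 i k l"
    "p3 l k i = p3 i k l"
    "p3 j l k = p3 j k l"
    "p3 k j l = p3 j k l"
    "p3 k l j = p3 j k l"
    "p3 l j k = p3 j k l"
    "p3 l k j = p3 j k l"
    "p2 j i = p2 i j"
    "p2 k i = p2 i k"
    "p2 l i = p2 i l"
    "p2 k j = p2 j k"
    "p2 l j = p2 j l"
    "p2 l k = p2 k l"
    using s2 s3a s3b by simp_all
  have e2a: "(\<Sum>e\<in>UNIV. p3 e a b * y e) = p2 a b" for a b
    using e2[of a b] s3a s3b by (metis (no_types, lifting) sum.cong)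
  have e2b: "(\<Sum>d\<in>UNIV. y d * p3 a d b) = p2 a b" for a b
    using e2[of a b] s3a s3b by (simp add: mult.commute)
  have e3b: "(\<Sum>d\<in>UNIV. y d * p1 d) = 3 * p0" using e3 by (simp add: mult.commute)
  have main: "(\<Sum>d\<in>UNIV. \<Sum>e\<in>UNIV. M e d * ph3 p0 p1 p2 p3 e i k * ph3 p0 p1 p2 p3 j d l)
      = Bf M (\<lambda>e. ph3 p0 p1 p2 p3 e i k) (\<lambda>d. ph3 p0 p1 p2 p3 j d l)"
    unfolding Bf_def ..
  have bf33: "Bf M (\<lambda>e. p3 e i k) (\<lambda>d. p3 j d l) = (\<Sum>p\<in>UNIV. \<Sum>q\<in>UNIV. M q p * p3 p k i * p3 q l j)"
    unfolding Bf_def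
    apply (subst sum.swap)
    apply (intro sum.cong refl)
    subgoal for e d using msym[of e d] s3a s3b by simp
    done
  define q where "q = 1 / p0"
  have hq: "p0 * q = 1" using p0 unfolding q_def by simp
  have q0: "q \<noteq> 0" using hq by auto
  have p: "p0 = 1/q" using hq q0 by (simp add: field_simps)
  have d1: "x / p0 = x * q" for x unfolding q_def by simp
  have d2: "x / p0^2 = x * q^2" for x unfolding q_def by (simp add: power_one_over)
  have d3: "x / p0^3 = x * q^3" for x unfolding q_def by (simp add: power_one_over)
  have d4: "x / p0^4 = x * q^4" for x unfolding q_def by (simp add: power_one_over)
  have d5: "x / (64 * p0^2) = x * q^2 / 64" for x unfolding q_def by (simp add: power_one_over)
  obtain Z where Z: "(\<Sum>p\<in>UNIV. \<Sum>q\<in>UNIV. M q p * p3 p k i * p3 q l j) = Z" by blast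
  show ?thesis
    unfolding main u v Bf_left Bf_right BGl BGr BPl BPr e2a e2b e3b e3 bf33
    unfolding G_def ph2_def ph4_def
    apply (simp only: canon)
    apply (simp only: d1 d2 d3 d4 d5)
    unfolding Z p
    using q0 by (simp add: field_simps) algebra
qed



lemma index_exists:
  fixes A :: "real^'n^'n"
  assumes "P = (\<lambda>v. v \<bullet> (A *v v) > 0) \<or> P = (\<lambda>v. v \<bullet> (A *v v) < 0)"
  shows "Max {dim V | V. subspace V \<and> (\<forall>v\<in>V. v \<noteq> 0 \<longrightarrow> P v)} \<in> {dim V | V. subspace V \<and> (\<forall>v\<in>V. v \<noteq> 0 \<longrightarrow> P v)}"
proof (rule Max_in)
  show "finite {dim V | V. subspace V \<and> (\<forall>v\<in>V. v \<noteq> 0 \<longrightarrow> P v)}"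
    by (rule finite_subset[of _ "{..CARD('n)}"]) (auto intro: dim_subset_UNIV_cart)
  show "{dim V | V. subspace V \<and> (\<forall>v\<in>V. v \<noteq> 0 \<longrightarrow> P v)} \<noteq> {}"
    using subspace_0[of "{0::real^'n}"] by (auto intro!: exI[of _ "{0}"] simp: subspace_def)
qed

lemma full_dim3:
  fixes S :: "(real^3) set"
  assumes "subspace S" "dim S = 3" shows "x \<in> S"
proof -
  have "dim (UNIV :: (real^3) set) = 3" using vec_dim_card[where 'a=real and 'n=3] by (simp add: dim_vec_eq)
  hence "span S = span UNIV" using assms by (intro dim_eq_span) auto
  thus ?thesis using assms(1) by (metis UNIV_I span_eq_iff span_UNIV)
qed

lemma inner_sym:
  fixes A :: "real^'n^'n"
  assumes "transpose A = A"
  shows "p \<bullet> (A *v n) = n \<bullet> (A *v p)"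
proof -
  have "p \<bullet> (A *v n) = (p v* A) \<bullet> n" by (simp add: dot_lmul_matrix)
  also have "p v* A = A *v p" using assms transpose_matrix_vector[of A p] by simp
  finally show ?thesis by (simp add: inner_commute)
qed

lemma nondeg:
  fixes A :: "real^3^3"
  assumes sym: "transpose A = A" and sg: "has_signature A 1 2" and w: "A *v w = 0"
  shows "w = 0"
proof -
  obtain P where P: "subspace P" "\<And>v. v \<in> P \<Longrightarrow> v \<noteq> 0 \<Longrightarrow> v \<bullet> (A *v v) > 0" "dim P = 1"
    using index_exists[of "\<lambda>v. v \<bullet> (A *v v) > 0" A] sg
    unfolding has_signature_def pos_index_def by auto
  obtain N where N: "subspace N" "\<And>v. v \<in> N \<Longrightarrow> v \<noteq> 0 \<Longrightarrow> v \<bullet> (A *v v) < 0" "dim N = 2"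
    using index_exists[of "\<lambda>v. v \<bullet> (A *v v) < 0" A] sg
    unfolding has_signature_def neg_index_def by auto
  have "P \<inter> N \<subseteq> {0}" using P(2) N(2) by fastforce
  hence d0: "dim (P \<inter> N) = 0" by simp
  have "dim {x + y |x y. x \<in> P \<and> y \<in> N} = 3" using dim_sums_Int[OF P(1) N(1)] P(3) N(3) d0 by linarith
  hence "w \<in> {x + y |x y. x \<in> P \<and> y \<in> N}" by (intro full_dim3 subspace_sums P(1) N(1))
  then obtain p n where pn: "p \<in> P" "n \<in> N" "w = p + n" by blast
  have "p \<bullet> (A *v w) = 0" "n \<bullet> (A *v w) = 0" using w by auto
  hence "p \<bullet> (A *v p) + p \<bullet> (A *v n) = 0" "n \<bullet> (A *v p) + n \<bullet> (A *v n) = 0"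
    using pn(3) by (simp_all add: matrix_vector_right_distrib inner_add_right)
  hence eq: "p \<bullet> (A *v p) = n \<bullet> (A *v n)" using inner_sym[OF sym, of p n] by linarith
  have p0: "p = 0"
  proof (rule ccontr)
    assume "p \<noteq> 0"
    hence "p \<bullet> (A *v p) > 0" using P(2) pn(1) by auto
    moreover have "n \<bullet> (A *v n) \<le> 0" using N(2)[OF pn(2)] by (cases "n = 0") auto
    ultimately show False using eq by linarith
  qed
  have "n = 0"
  proof (rule ccontr)
    assume "n \<noteq> 0"
    hence "n \<bullet> (A *v n) < 0" using N(2) pn(2) by auto
    thus False using eq p0 by simp
  qed
  thus ?thesis using p0 pn(3) by simp
qed



lemma P2_sym: "P2 C a b y = P2 C b a y"
  unfolding P2_def using S3_sym1 by metis

lemma phi2_sym: "phi2 C a b y = phi2 C b a y"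
  unfolding phi2_def ph2_def using P2_sym by (simp add: mult.commute)

definition Gm :: "(3 \<Rightarrow> 3 \<Rightarrow> 3 \<Rightarrow> real) \<Rightarrow> real^3 \<Rightarrow> real^3^3" where
  "Gm C y = (\<chi> i j. - phi2 C j i y / 4)"

lemma Gm_ker:
  assumes pos: "P0 C y > 0" and sg: "has_signature (\<chi> i j. P2 C j i y) 1 2" and v: "Gm C y *v v = 0"
  shows "v = 0"
proof -
  let ?H = "(\<chi> i j. P2 C j i y) :: real^3^3"
  define p0 where "p0 = P0 C y"
  have p0: "p0 \<noteq> 0" using pos unfolding p0_def by simp
  define \<beta> where "\<beta> = (\<Sum>j\<in>UNIV. P1 C j y * v$j)"
  have Hs: "transpose ?H = ?H" by (simp add: vec_eq_iff transpose_def P2_sym)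
  have Hv: "(\<Sum>j\<in>UNIV. P2 C j i y * v$j) = P1 C i y * \<beta> / p0" for i
  proof -
    have "(Gm C y *v v)$i = 0" using v by simp
    hence z: "(\<Sum>j\<in>UNIV. (- phi2 C j i y / 4) * v$j) = 0"
      by (simp add: Gm_def matrix_vector_mult_def)
    have "(- phi2 C j i y / 4) * v$j = (P1 C i y / (4*p0^2)) * (P1 C j y * v$j) - (1/(4*p0)) * (P2 C j i y * v$j)" for j
      unfolding phi2_def ph2_def p0_def[symmetric] using p0 by (simp add: field_simps)
    hence "(\<Sum>j\<in>UNIV. (- phi2 C j i y / 4) * v$j) = (P1 C i y / (4*p0^2)) * \<beta> - (1/(4*p0)) * (\<Sum>j\<in>UNIV. P2 C j i y * v$j)"
      unfolding \<beta>_def by (simp add: sum_subtractf sum_distrib_left)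
    with z show ?thesis using p0 by (simp add: field_simps power2_eq_square)
  qed
  define c where "c = \<beta> / (2 * p0)"
  define w where "w = v - c *\<^sub>R y"
  have "?H *v w = 0"
  proof -
    have "(?H *v w)$i = 0" for i
    proof -
      have "(?H *v w)$i = (\<Sum>j\<in>UNIV. P2 C j i y * v$j) - c * (\<Sum>j\<in>UNIV. P2 C i j y * y$j)"
        unfolding w_def by (simp add: matrix_vector_mult_def algebra_simps sum_subtractf sum_distrib_left P2_sym)
      also have "\<dots> = 0" unfolding Hv euler1 c_def using p0 by (simp add: field_simps)
      finally show ?thesis .
    qed
    thus ?thesis by (simp add: vec_eq_iff)
  qed
  hence "w = 0" using nondeg[OF Hs sg] by blast
  hence vc: "v = c *\<^sub>R y" unfolding w_def by simp
  have "\<beta> = c * (3 * p0)" unfolding \<beta>_def vc p0_def euler3[symmetric]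
    by (simp add: sum_distrib_left mult_ac)
  hence "c = 0" using p0 unfolding c_def by (simp add: field_simps)
  thus ?thesis using vc by simp
qed

lemma Gm_sym: "transpose (Gm C y) = Gm C y"
  by (simp add: vec_eq_iff transpose_def Gm_def phi2_sym)

lemma Gm_inv:
  assumes pos: "P0 C y > 0" and sg: "has_signature (\<chi> i j. P2 C j i y) 1 2"
  obtains B where "B ** Gm C y = mat 1" "Gm C y ** B = mat 1" "transpose B = B"
proof -
  obtain B where B1: "B ** Gm C y = mat 1"
    using matrix_left_invertible_ker[of "Gm C y"] Gm_ker[OF pos sg] by blast
  hence B2: "Gm C y ** B = mat 1" using matrix_left_right_inverse by blast
  have "transpose B ** Gm C y = mat 1"
    using B2 matrix_transpose_mul[of "Gm C y" B] Gm_sym[of C y] by simp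
  hence "transpose B = transpose B ** (Gm C y ** B)" using B2 by simp
  also have "\<dots> = B" using \<open>transpose B ** Gm C y = mat 1\<close> by (simp add: matrix_mul_assoc)
  finally show ?thesis using that B1 B2 by blast
qed

definition cmat :: "real^3^3 \<Rightarrow> complex^3^3" where
  "cmat A = (\<chi> i j. complex_of_real (A$i$j))"

lemma cmat_mult: "cmat A ** cmat B = cmat (A ** B)"
  by (simp add: vec_eq_iff cmat_def matrix_matrix_mult_def)

lemma cmat_1: "cmat (mat 1) = mat 1"
  by (simp add: vec_eq_iff cmat_def mat_def)

lemma matrix_inv_unique:
  fixes X Y :: "'a::comm_ring_1^'n^'n"
  assumes "X ** Y = mat 1" "Y ** X = mat 1"
  shows "matrix_inv X = Y"
proof -
  have "\<exists>A'. X ** A' = mat 1 \<and> A' ** X = mat 1" using assms by blast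
  hence Z: "X ** matrix_inv X = mat 1 \<and> matrix_inv X ** X = mat 1"
    unfolding matrix_inv_def by (rule someI_ex)
  have "matrix_inv X = matrix_inv X ** (X ** Y)" using assms by simp
  also have "\<dots> = Y" using Z by (simp add: matrix_mul_assoc)
  finally show ?thesis .
qed



lemma open_V: "open {y. 0 < P0 C y}"
  unfolding P0_def by (intro open_Collect_less continuous_intros)

lemma cx1: "complex_of_real m * ((- \<i> / 2 * 1) * complex_of_real (- a / 4)) * ((\<i> / 2 * 1) * complex_of_real (- b / 4))
   = complex_of_real (m * a * b / 64)"
  by (simp add: field_simps)

lemma cx2: "(- \<i> / 2 * (\<i> / 2 * 1)) * complex_of_real x = complex_of_real (x / 4)"
  by (simp add: field_simps)

theorem lemma2p9:
  fixes f :: "real^3 \<Rightarrow> real" and t :: "complex^3" and i j k l :: 3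
  assumes "cubic_form3 f"
    and "Imv t \<in> index_cone3 f"
  shows "amwp_R f i j k l t =
      amwp_g f i j t * amwp_g f k l t + amwp_g f i l t * amwp_g f k j t
      - (\<Sum>p\<in>UNIV. \<Sum>q\<in>UNIV. amwp_ginv f t q p
            * complex_of_real (f3 f i k p (Imv t)) * complex_of_real (f3 f j l q (Imv t))
            / (64 * complex_of_real (f (Imv t)) ^ 2))"
proof -
  obtain C where fC: "f = P0 C" using cubic_P0 assms(1) by blast
  define y where "y = Imv t"
  define V where "V = {y. 0 < P0 C y}"
  have oV: "open V" unfolding V_def by (rule open_V)
  have yV: "y \<in> V" and sg: "has_signature (\<chi> i j. P2 C j i y) 1 2"
    using assms(2) unfolding fC y_def[symmetric] index_cone3_def hessian_P0 V_def by auto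
  have nz: "P0 C z \<noteq> 0" if "z \<in> V" for z using that unfolding V_def by simp
  have s1: "dtb j (amwp_potential (P0 C)) t' = (\<i> / 2 * 1) * complex_of_real (- phi1 C j (Imv t'))"
    if "Imv t' \<in> V" for j t'
    by (rule wirt(2)[where V=V and h="\<lambda>y. - ln (P0 C y)"])
       (use oV that in \<open>auto simp: amwp_potential_def V_def intro!: phi0_deriv\<close>)
  have g: "amwp_g (P0 C) i j t' = complex_of_real (- phi2 C j i (Imv t') / 4)"
    if "Imv t' \<in> V" for i j t'
  proof -
    have "amwp_g (P0 C) i j t' = (- \<i> / 2 * (\<i> / 2 * 1)) * complex_of_real (- phi2 C j i (Imv t'))"
      unfolding amwp_g_def
      by (rule wirt(1)[where V=V and h="\<lambda>y. - phi1 C j y"])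
         (use oV that s1 nz in \<open>auto intro!: derivative_eq_intros phi1_deriv\<close>)
    thus ?thesis by (simp only: cx2)
  qed
  have dtg: "dt k (amwp_g (P0 C) i e) t = (- \<i> / 2 * 1) * complex_of_real (- phi3 C e i k y / 4)" for i e
    by (rule wirt(1)[where V=V and h="\<lambda>z. - phi2 C e i z / 4"])
       (use oV yV g nz in \<open>auto simp: y_def intro!: derivative_eq_intros phi2_deriv\<close>)
  have dtbg: "dtb l (amwp_g (P0 C) d j) t' = (\<i> / 2 * 1) * complex_of_real (- phi3 C j d l (Imv t') / 4)"
    if "Imv t' \<in> V" for d j t'
    by (rule wirt(2)[where V=V and h="\<lambda>z. - phi2 C j d z / 4"])
       (use oV that g nz in \<open>auto intro!: derivative_eq_intros phi2_deriv\<close>)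
  have R4: "dt k (dtb l (amwp_g (P0 C) i j)) t = complex_of_real (- phi4 C j i l k y / 4 / 4)"
  proof -
    have "dt k (dtb l (amwp_g (P0 C) i j)) t = (- \<i> / 2 * (\<i> / 2 * 1)) * complex_of_real (- phi4 C j i l k y / 4)"
      by (rule wirt(1)[where V=V and h="\<lambda>z. - phi3 C j i l z / 4"])
         (use oV yV dtbg nz in \<open>auto simp: y_def intro!: derivative_eq_intros phi3_deriv\<close>)
    thus ?thesis by (simp only: cx2)
  qed
  obtain B where B1: "B ** Gm C y = mat 1" and B2: "Gm C y ** B = mat 1" and B3: "transpose B = B"
    using Gm_inv[of C y] yV sg unfolding V_def by auto
  have gm: "amwp_gmat (P0 C) t = cmat (Gm C y)"
    using g[OF yV[unfolded y_def]] by (simp add: vec_eq_iff amwp_gmat_def cmat_def Gm_def y_def)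
  have ginv: "amwp_ginv (P0 C) t e d = complex_of_real (B$e$d)" for e d
  proof -
    have "matrix_inv (amwp_gmat (P0 C) t) = cmat B"
      unfolding gm by (rule matrix_inv_unique) (simp_all add: cmat_mult B1 B2 cmat_1)
    thus ?thesis unfolding amwp_ginv_def by (simp add: cmat_def)
  qed
  have gt: "amwp_g (P0 C) i j t = complex_of_real (- phi2 C j i y / 4)" for i j
    using g yV unfolding y_def by auto
  have dtbgt: "dtb l (amwp_g (P0 C) d j) t = (\<i> / 2 * 1) * complex_of_real (- phi3 C j d l y / 4)" for d j
    using dtbg yV unfolding y_def by auto
  have minv: "(\<Sum>d\<in>UNIV. B$e$d * (- ph2 (P0 C y) (\<lambda>a. P1 C a y) (\<lambda>a b. P2 C a b y) d j / 4)) = (if e = j then 1 else 0)" for e j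
  proof -
    have "(B ** Gm C y)$e$j = (if e = j then 1 else 0)" using B1 by (simp add: mat_def)
    thus ?thesis unfolding matrix_matrix_mult_def Gm_def using phi2_sym[of C] by (simp add: phi2_def)
  qed
  have msym: "B$a$b = B$b$a" for a b proof -
    have "(transpose B)$a$b = B$b$a" by (simp add: transpose_def)
    thus ?thesis using B3 by simp
  qed
  have key': "- phi4 C j i l k y / 16 - (\<Sum>d\<in>UNIV. \<Sum>e\<in>UNIV. B$e$d * phi3 C e i k y * phi3 C j d l y) / 64
     = (- phi2 C j i y / 4) * (- phi2 C l k y / 4) + (- phi2 C l i y / 4) * (- phi2 C j k y / 4)
       - (\<Sum>p\<in>UNIV. \<Sum>q\<in>UNIV. B$q$p * S3 C p k i * S3 C q l j) / (64 * (P0 C y)^2)"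
    unfolding phi2_def phi3_def phi4_def
    apply (rule key[where y="\<lambda>a. y$a" and M="\<lambda>a b. B$a$b"])
    subgoal using nz yV by blast
    subgoal by (rule P2_sym)
    subgoal by (rule S3_sym1)
    subgoal by (rule S3_sym2)
    subgoal by (rule euler1)
    subgoal by (rule euler2)
    subgoal by (rule euler3)
    subgoal by (rule minv)
    subgoal by (rule msym)
    done
  show ?thesis
    unfolding amwp_R_def fC y_def[symmetric] R4 dtg dtbgt ginv gt f3_P0 cx1
    using arg_cong[OF key', of complex_of_real]
    by (simp add: of_real_sum sum_divide_distrib)
qed

end
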